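(* Let $G$ be a graph with vertex set $V$ and $k\ge1$, let $G'$, $L,R,P,Q$ be as constructed in the context, and let $S=V\cup L\cup Q$, $T=V\cup R\cup P$ and $\ell=2\binom k2+\binom k2^2+2k$. If $G$ has a clique of size $k$, then there is a token jumping reconfiguration sequence of length at most $\ell$ from $S$ to $T$ in $G'$.
   Context: Construction of $G'$: start with $V$; for each edge $e=\{u,v\}$ of $G$ add a vertex $x_e$ adjacent to $u$ and $v$ (let $E$ be the set of these). Add disjoint sets $L$ and $R$ of size $\binom k2$ each, and for every $l\in L$, $r\in R$ add a path $l-p_{l,r}-q_{l,r}-r$ with two new internal vertices; $P$ is the set of all $p_{l,r}$ (the neighbors of $L$) and $Q$ the set of all $q_{l,r}$ (the neighbors of $R$). These vertices have no edges to $V\cup E$. For each $v\in V$ add a new vertex $z_v$ adjacent only to $v$. A token jumping reconfiguration sequence of length $m$ from $S$ to $T$ is a sequence $S=I_0,\dots,I_m=T$ of independent sets of size $|S|$ with each $I_{j+1}=(I_j\setminus\{u\})\cup\{w\}$ for some $u\in I_j$, $w\in V(G')\setminus I_j$. *)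

theory Defs
  imports Main
begin

definition simple_graph :: "'a set \<Rightarrow> 'a set set \<Rightarrow> bool" where
  "simple_graph V E \<longleftrightarrow> finite V \<and>
     (\<forall>e\<in>E. \<exists>u v. u \<in> V \<and> v \<in> V \<and> u \<noteq> v \<and> e = {u, v})"

definition is_clique :: "'a set \<Rightarrow> 'a set set \<Rightarrow> 'a set \<Rightarrow> bool" where
  "is_clique V E K \<longleftrightarrow> K \<subseteq> V \<and> (\<forall>u\<in>K. \<forall>v\<in>K. u \<noteq> v \<longrightarrow> {u, v} \<in> E)"

text \<open>Vertices of G': original vertices, edge vertices x_e, L, R (indexed by i < binom k 2),
  path vertices p_{l,r}, q_{l,r}, and pendant vertices z_v.\<close>
datatype 'a gvtx = Vx 'a | Ex "'a set" | Lx nat | Rx nat | Px nat nat | Qx nat nat | Zx 'a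

definition Lset :: "nat \<Rightarrow> 'a gvtx set" where
  "Lset k = {Lx i | i. i < k choose 2}"
definition Rset :: "nat \<Rightarrow> 'a gvtx set" where
  "Rset k = {Rx j | j. j < k choose 2}"
definition Pset :: "nat \<Rightarrow> 'a gvtx set" where
  "Pset k = {Px i j | i j. i < k choose 2 \<and> j < k choose 2}"
definition Qset :: "nat \<Rightarrow> 'a gvtx set" where
  "Qset k = {Qx i j | i j. i < k choose 2 \<and> j < k choose 2}"

definition Gp_verts :: "'a set \<Rightarrow> 'a set set \<Rightarrow> nat \<Rightarrow> 'a gvtx set" where
  "Gp_verts V E k = Vx ` V \<union> Ex ` E \<union> Lset k \<union> Rset k \<union> Pset k \<union> Qset k \<union> Zx ` V"

text \<open>Directed version of the edges of G' (made symmetric in Gp_adj).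
  Path l - p_{l,r} - q_{l,r} - r is Lx i - Px i j - Qx i j - Rx j.\<close>
definition Gp_edges :: "'a set \<Rightarrow> 'a set set \<Rightarrow> nat \<Rightarrow> ('a gvtx \<times> 'a gvtx) set" where
  "Gp_edges V E k =
     {(Vx u, Ex e) | u e. e \<in> E \<and> u \<in> e}
   \<union> {(Lx i, Px i j) | i j. i < k choose 2 \<and> j < k choose 2}
   \<union> {(Px i j, Qx i j) | i j. i < k choose 2 \<and> j < k choose 2}
   \<union> {(Qx i j, Rx j) | i j. i < k choose 2 \<and> j < k choose 2}
   \<union> {(Vx v, Zx v) | v. v \<in> V}"

definition Gp_adj :: "'a set \<Rightarrow> 'a set set \<Rightarrow> nat \<Rightarrow> 'a gvtx \<Rightarrow> 'a gvtx \<Rightarrow> bool" where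
  "Gp_adj V E k x y \<longleftrightarrow> (x, y) \<in> Gp_edges V E k \<or> (y, x) \<in> Gp_edges V E k"

definition indep_Gp :: "'a set \<Rightarrow> 'a set set \<Rightarrow> nat \<Rightarrow> 'a gvtx set \<Rightarrow> bool" where
  "indep_Gp V E k I \<longleftrightarrow> I \<subseteq> Gp_verts V E k \<and>
     (\<forall>x\<in>I. \<forall>y\<in>I. \<not> Gp_adj V E k x y)"

definition tj_seq :: "'a set \<Rightarrow> 'a set set \<Rightarrow> nat \<Rightarrow> 'a gvtx set \<Rightarrow> 'a gvtx set \<Rightarrow> nat \<Rightarrow> bool" where
  "tj_seq V E k S T m \<longleftrightarrow> (\<exists>I :: nat \<Rightarrow> 'a gvtx set.
     I 0 = S \<and> I m = T \<and>
     (\<forall>j\<le>m. indep_Gp V E k (I j) \<and> card (I j) = card S) \<and>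
     (\<forall>j<m. \<exists>u\<in>I j. \<exists>w\<in>Gp_verts V E k - I j. I (Suc j) = (I j - {u}) \<union> {w}))"

end

theory Submission
  imports Defs
begin

definition tj_step :: "'a set \<Rightarrow> 'a set set \<Rightarrow> nat \<Rightarrow> 'a gvtx set \<Rightarrow> 'a gvtx set \<Rightarrow> bool" where
  "tj_step V E k B C \<longleftrightarrow> (\<exists>u\<in>B. \<exists>w\<in>Gp_verts V E k - B. C = (B - {u}) \<union> {w})"

inductive reach :: "'a set \<Rightarrow> 'a set set \<Rightarrow> nat \<Rightarrow> 'a gvtx set \<Rightarrow> 'a gvtx set \<Rightarrow> nat \<Rightarrow> bool"
  for V E k where
  rrefl: "indep_Gp V E k A \<Longrightarrow> reach V E k A A 0"
| rstep: "reach V E k A B n \<Longrightarrow> indep_Gp V E k C \<Longrightarrow> tj_step V E k B C \<Longrightarrow> reach V E k A C (Suc n)"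

lemma reach_trans:
  assumes "reach V E k B C m" "reach V E k A B n"
  shows "reach V E k A C (n + m)"
  using assms by (induction rule: reach.induct) (auto intro: reach.intros)

lemma reach_fin:
  assumes "reach V E k A B n" "finite A"
  shows "finite B"
  using assms by (induction rule: reach.induct) (auto simp: tj_step_def)

lemma reach_tj:
  assumes "reach V E k A B n" "finite A"
  shows "\<exists>I. I 0 = A \<and> I n = B \<and> (\<forall>j\<le>n. indep_Gp V E k (I j) \<and> card (I j) = card A) \<and>
     (\<forall>j<n. \<exists>u\<in>I j. \<exists>w\<in>Gp_verts V E k - I j. I (Suc j) = (I j - {u}) \<union> {w})"
  using assms
proof (induction rule: reach.induct)
  case (rrefl A)
  show ?case by (rule exI[where x="\<lambda>_. A"]) (simp add: rrefl.hyps)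
next
  case (rstep A B n C)
  then obtain I where I: "I 0 = A" "I n = B" "\<forall>j\<le>n. indep_Gp V E k (I j) \<and> card (I j) = card A"
     "\<forall>j<n. \<exists>u\<in>I j. \<exists>w\<in>Gp_verts V E k - I j. I (Suc j) = (I j - {u}) \<union> {w}"
    using rstep.IH[OF rstep.prems] by (elim exE conjE) simp
  obtain u w where uw: "u \<in> B" "w \<in> Gp_verts V E k - B" "C = (B - {u}) \<union> {w}"
    using \<open>tj_step V E k B C\<close> unfolding tj_step_def by blast
  have fB: "finite B"
    using reach_fin[OF rstep(1) rstep.prems] .
  have cC: "card C = card A"
  proof -
    have "C = insert w (B - {u})" using uw by auto
    then have "card C = Suc (card (B - {u}))" using fB uw by simp
    also have "\<dots> = card B" using fB uw card_Suc_Diff1 by metis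
    also have "\<dots> = card A" using I by auto
    finally show ?thesis .
  qed
  define J where "J = I(Suc n := C)"
  have J1: "J 0 = A" "J (Suc n) = C" using I(1) by (auto simp: J_def)
  have J2: "\<forall>j\<le>Suc n. indep_Gp V E k (J j) \<and> card (J j) = card A"
  proof (intro allI impI)
    fix j assume "j \<le> Suc n"
    then consider "j = Suc n" | "j \<le> n" by linarith
    then show "indep_Gp V E k (J j) \<and> card (J j) = card A"
      by cases (use I(3) cC rstep(2) in \<open>simp_all add: J_def\<close>)
  qed
  have J3: "\<forall>j<Suc n. \<exists>u\<in>J j. \<exists>w\<in>Gp_verts V E k - J j. J (Suc j) = (J j - {u}) \<union> {w}"
  proof (intro allI impI)
    fix j assume "j < Suc n"
    then consider "j = n" | "j < n" by linarith
    then show "\<exists>u\<in>J j. \<exists>w\<in>Gp_verts V E k - J j. J (Suc j) = (J j - {u}) \<union> {w}"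
    proof cases
      case 1 then show ?thesis using uw I(2) unfolding J_def by auto
    next
      case 2 then show ?thesis using I(4) by (simp add: J_def)
    qed
  qed
  show ?case using J1 J2 J3 by blast
qed

lemma reach_imp_tj:
  assumes "reach V E k A B n" "finite A"
  shows "tj_seq V E k A B n"
  using reach_tj[OF assms] unfolding tj_seq_def by blast

lemma phase:
  assumes "finite X" "inj_on a X" "inj_on b X" "a`X \<subseteq> A" "b`X \<inter> A = {}" "b`X \<subseteq> Gp_verts V E k"
    "\<And>X'. X' \<subseteq> X \<Longrightarrow> indep_Gp V E k (A - a`X' \<union> b`X')"
  shows "reach V E k A (A - a`X \<union> b`X) (card X)"
  using assms
proof (induction X rule: finite_induct)
  case empty
  then show ?case using rrefl[of V E k A] by auto
next
  case (insert x F)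
  have IH: "reach V E k A (A - a`F \<union> b`F) (card F)"
  proof (rule insert.IH)
    show "inj_on a F" "inj_on b F" "a`F \<subseteq> A" "b`F \<inter> A = {}" "b`F \<subseteq> Gp_verts V E k"
      using insert.prems(1-5) by (auto simp: inj_on_insert)
    show "\<And>X'. X' \<subseteq> F \<Longrightarrow> indep_Gp V E k (A - a`X' \<union> b`X')"
      using insert.prems(6) by blast
  qed
  have ax: "a x \<in> A - a`F \<union> b`F" using insert.hyps insert.prems(1-5) by auto
  have bx: "b x \<in> Gp_verts V E k - (A - a`F \<union> b`F)" using insert.hyps insert.prems(1-5) by auto
  have eq: "A - a`(insert x F) \<union> b`(insert x F) = ((A - a`F \<union> b`F) - {a x}) \<union> {b x}"
    using insert.hyps insert.prems(1-5) by auto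
  have st: "tj_step V E k (A - a`F \<union> b`F) (A - a`(insert x F) \<union> b`(insert x F))"
    unfolding tj_step_def eq using ax bx by blast
  have c: "card (insert x F) = Suc (card F)" using insert.hyps by simp
  show ?case unfolding c by (rule rstep[OF IH insert.prems(6)[OF order_refl] st])
qed

lemma Lset_img: "Lset k = Lx ` {0..<k choose 2}" unfolding Lset_def by auto
lemma Rset_img: "Rset k = Rx ` {0..<k choose 2}" unfolding Rset_def by auto
lemma Pset_img: "Pset k = (\<lambda>(i,j). Px i j) ` ({0..<k choose 2} \<times> {0..<k choose 2})"
  unfolding Pset_def by auto
lemma Qset_img: "Qset k = (\<lambda>(i,j). Qx i j) ` ({0..<k choose 2} \<times> {0..<k choose 2})"
  unfolding Qset_def by auto

theorem lemma6p2:
  fixes V :: "'a set" and E :: "'a set set" and k :: nat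
  assumes "simple_graph V E"
    and "k \<ge> 1"
    and "\<exists>K. is_clique V E K \<and> card K = k"
  shows "\<exists>m \<le> 2 * (k choose 2) + (k choose 2)^2 + 2 * k.
           tj_seq V E k (Vx ` V \<union> Lset k \<union> Qset k) (Vx ` V \<union> Rset k \<union> Pset k) m"
proof -
  obtain K where K: "is_clique V E K" "card K = k" using assms(3) by blast
  have finV: "finite V" using assms(1) unfolding simple_graph_def by blast
  have KV: "K \<subseteq> V" using K unfolding is_clique_def by blast
  have finK: "finite K" using KV finV finite_subset by blast
  define N where "N = k choose 2"
  define X where "X = {0..<N}"
  define CE where "CE = {B. B \<subseteq> K \<and> card B = 2}"
  have cCE: "card CE = N" unfolding CE_def N_def using n_subsets[OF finK, of 2] K(2) by simp
  have finCE: "finite CE" unfolding CE_def using finK by simp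
  have CEE: "CE \<subseteq> E"
  proof
    fix e assume "e \<in> CE"
    then obtain x y where "e = {x,y}" "x \<noteq> y" "e \<subseteq> K" unfolding CE_def by (auto simp: card_2_iff)
    then show "e \<in> E" using K(1) unfolding is_clique_def by auto
  qed
  obtain g where g: "bij_betw g X CE" using ex_bij_betw_nat_finite[OF finCE] cCE X_def by auto
  have gK: "\<And>i. i \<in> X \<Longrightarrow> g i \<subseteq> K" using g unfolding bij_betw_def CE_def by auto
  have gK2: "\<And>i u. i \<in> X \<Longrightarrow> u \<in> g i \<Longrightarrow> u \<in> K" using gK by blast
  have gE: "\<And>i. i \<in> X \<Longrightarrow> g i \<in> E" using g CEE unfolding bij_betw_def by auto
  have ginj: "inj_on (Ex \<circ> g) X" using g unfolding bij_betw_def inj_on_def by auto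
  define Q' where "Q' = (\<lambda>(i,j). Qx i j :: 'a gvtx) ` (X \<times> X)"
  define P' where "P' = (\<lambda>(i,j). Px i j :: 'a gvtx) ` (X \<times> X)"
  define S0 where "S0 = Vx ` V \<union> Lx ` X \<union> Q'"
  define S1 where "S1 = S0 - Vx ` K \<union> Zx ` K"
  define S2 where "S2 = S1 - Lx ` X \<union> (Ex \<circ> g) ` X"
  define S3 where "S3 = S2 - (\<lambda>(i,j). Qx i j) ` (X \<times> X) \<union> (\<lambda>(i,j). Px i j) ` (X \<times> X)"
  define S4 where "S4 = S3 - (Ex \<circ> g) ` X \<union> Rx ` X"
  define S5 where "S5 = S4 - Zx ` K \<union> Vx ` K"
  have verts: "Gp_verts V E k = Vx ` V \<union> Ex ` E \<union> Lx ` X \<union> Rx ` X \<union> P' \<union> Q' \<union> Zx ` V"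
    unfolding Gp_verts_def Lset_img Rset_img Pset_img Qset_img P'_def Q'_def X_def N_def ..
  have adj: "Gp_adj V E k x y \<longleftrightarrow>
     (\<exists>u e. e \<in> E \<and> u \<in> e \<and> (x = Vx u \<and> y = Ex e \<or> y = Vx u \<and> x = Ex e))
   \<or> (\<exists>i j. i \<in> X \<and> j \<in> X \<and> (x = Lx i \<and> y = Px i j \<or> y = Lx i \<and> x = Px i j))
   \<or> (\<exists>i j. i \<in> X \<and> j \<in> X \<and> (x = Qx i j \<and> y = Px i j \<or> y = Qx i j \<and> x = Px i j))
   \<or> (\<exists>i j. i \<in> X \<and> j \<in> X \<and> (x = Qx i j \<and> y = Rx j \<or> y = Qx i j \<and> x = Rx j))
   \<or> (\<exists>v. v \<in> V \<and> (x = Vx v \<and> y = Zx v \<or> y = Vx v \<and> x = Zx v))" for x y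
    unfolding Gp_adj_def Gp_edges_def X_def N_def by auto
  have p1: "reach V E k S0 S1 (card K)" unfolding S1_def
  proof (rule phase)
    fix X' assume "X' \<subseteq> K"
    then show "indep_Gp V E k (S0 - Vx ` X' \<union> Zx ` X')"
      unfolding indep_Gp_def verts adj S0_def Q'_def using KV by auto
  qed (use finK KV in \<open>auto simp: verts S0_def Q'_def inj_on_def\<close>)
  have p2: "reach V E k S1 S2 (card X)" unfolding S2_def
  proof (rule phase)
    fix X' assume X': "X' \<subseteq> X"
    have gX: "\<And>i u. i \<in> X' \<Longrightarrow> u \<in> g i \<Longrightarrow> u \<in> K" using gK2 X' by blast
    then show "indep_Gp V E k (S1 - Lx ` X' \<union> (Ex \<circ> g) ` X')"
      unfolding indep_Gp_def verts adj S1_def S0_def Q'_def using KV gK2 gE gX X' by (auto 4 3)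
  qed (use ginj gE in \<open>auto simp: X_def verts S1_def S0_def Q'_def inj_on_def\<close>)
  have p3: "reach V E k S2 S3 (card (X \<times> X))" unfolding S3_def
  proof (rule phase)
    fix X' assume "X' \<subseteq> X \<times> X"
    then show "indep_Gp V E k (S2 - (\<lambda>(i,j). Qx i j) ` X' \<union> (\<lambda>(i,j). Px i j) ` X')"
      unfolding indep_Gp_def verts adj S2_def S1_def S0_def Q'_def P'_def using KV gK2 gE by (auto 4 3)
  qed (auto simp: X_def verts S2_def S1_def S0_def Q'_def P'_def inj_on_def)
  have p4: "reach V E k S3 S4 (card X)" unfolding S4_def
  proof (rule phase)
    fix X' assume X': "X' \<subseteq> X"
    have gX: "\<And>i u. i \<in> X' \<Longrightarrow> u \<in> g i \<Longrightarrow> u \<in> K" using gK2 X' by blast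
    then show "indep_Gp V E k (S3 - (Ex \<circ> g) ` X' \<union> Rx ` X')"
      unfolding indep_Gp_def verts adj S3_def S2_def S1_def S0_def Q'_def P'_def using KV gK2 gE gX X' by (auto 4 3)
  qed (use ginj gE in \<open>auto simp: X_def verts S3_def S2_def S1_def S0_def Q'_def inj_on_def\<close>)
  have p5: "reach V E k S4 S5 (card K)" unfolding S5_def
  proof (rule phase)
    fix X' assume "X' \<subseteq> K"
    then show "indep_Gp V E k (S4 - Zx ` X' \<union> Vx ` X')"
      unfolding indep_Gp_def verts adj S4_def S3_def S2_def S1_def S0_def Q'_def P'_def using KV gK2 gE by (auto 4 3)
  qed (use finK KV in \<open>auto simp: verts S4_def S3_def S2_def S1_def S0_def Q'_def inj_on_def\<close>)
  have r: "reach V E k S0 S5 (card K + card X + card (X \<times> X) + card X + card K)"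
    using reach_trans[OF p5 reach_trans[OF p4 reach_trans[OF p3 reach_trans[OF p2 p1]]]] .
  have eS0: "S0 = Vx ` V \<union> Lset k \<union> Qset k"
    unfolding S0_def Lset_img Qset_img Q'_def X_def N_def ..
  have eS5: "S5 = Vx ` V \<union> Rset k \<union> Pset k"
    unfolding Rset_img Pset_img
    using KV gK gE unfolding S5_def S4_def S3_def S2_def S1_def S0_def Q'_def X_def N_def by auto
  have fS0: "finite S0" unfolding S0_def Q'_def X_def using finV by simp
  have cm: "card K + card X + card (X \<times> X) + card X + card K = 2 * (k choose 2) + (k choose 2)^2 + 2 * k"
    using K(2) by (simp add: X_def N_def card_cartesian_product power2_eq_square)
  show ?thesis using reach_imp_tj[OF r fS0] unfolding eS0 eS5 cm by auto
qed

end
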